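(* Let $T$ be a horizon with $T>25\log T$. Consider the two-armed instance in which arm 1 is Bernoulli with mean $\mu_1=(2e)^{-T}$ and arm 2 is Bernoulli with mean $\mu_2=1$. Then the UCB algorithm run for $T$ rounds on this instance has Nash regret $$\textsc{NR}_T\ge 1-\frac1T.$$
   Context: Nash regret: $\textsc{NR}_T:=\mu^*-\big(\prod_{t=1}^T\mathbb{E}[\mu_{I_t}]\big)^{1/T}$, where $I_t$ is the arm pulled in round $t$ and $\mu^*=\max_i\mu_i$. $\log$ is the natural logarithm. UCB algorithm: in each round $t$ it pulls an arm maximizing $\mathrm{UCB}_{i,t}:=\widehat\mu_i+\sqrt{\frac{2\log T}{n_{i,t}}}$, where $n_{i,t}$ is the number of times arm $i$ was pulled before round $t$ and $\widehat\mu_i$ its empirical mean (an arm not yet pulled has index $+\infty$); ties are broken by an arbitrary but fixed deterministic rule. *)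

theory Defs
  imports "HOL-Probability.Probability"
begin

text \<open>A history is the list of (arm pulled, observed Bernoulli reward) of the rounds so far.\<close>
type_synonym history = "(nat \<times> bool) list"

definition pulls :: "history \<Rightarrow> nat \<Rightarrow> nat" where
  "pulls h i = length (filter (\<lambda>p. fst p = i) h)"

definition emp_mean :: "history \<Rightarrow> nat \<Rightarrow> real" where
  "emp_mean h i = (\<Sum>p\<leftarrow>filter (\<lambda>p. fst p = i) h. if snd p then 1 else 0) / real (pulls h i)"

definition ucb_index :: "nat \<Rightarrow> history \<Rightarrow> nat \<Rightarrow> ereal" where
  "ucb_index T h i = (if pulls h i = 0 then \<infinity>
      else ereal (emp_mean h i + sqrt (2 * ln (real T) / real (pulls h i))))"

text \<open>A deterministic UCB selection rule on arm set A: always pulls an arm of maximal index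
  (ties broken by an arbitrary fixed deterministic rule).\<close>
definition is_ucb_rule :: "nat set \<Rightarrow> nat \<Rightarrow> (history \<Rightarrow> nat) \<Rightarrow> bool" where
  "is_ucb_rule A T pick \<longleftrightarrow>
     (\<forall>h. pick h \<in> A \<and> (\<forall>j\<in>A. ucb_index T h j \<le> ucb_index T h (pick h)))"

fun hist :: "(history \<Rightarrow> nat) \<Rightarrow> (nat \<Rightarrow> real) \<Rightarrow> nat \<Rightarrow> history pmf" where
  "hist pick \<mu> 0 = return_pmf []"
| "hist pick \<mu> (Suc t) = bind_pmf (hist pick \<mu> t)
     (\<lambda>h. map_pmf (\<lambda>r. h @ [(pick h, r)]) (bernoulli_pmf (\<mu> (pick h))))"

text \<open>E[mu_{I_{t+1}}]: expected mean of the arm pulled in round t+1.\<close>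
definition exp_mean_pulled :: "(history \<Rightarrow> nat) \<Rightarrow> (nat \<Rightarrow> real) \<Rightarrow> nat \<Rightarrow> real" where
  "exp_mean_pulled pick \<mu> t = measure_pmf.expectation (hist pick \<mu> t) (\<lambda>h. \<mu> (pick h))"

definition nash_regret :: "nat set \<Rightarrow> (history \<Rightarrow> nat) \<Rightarrow> (nat \<Rightarrow> real) \<Rightarrow> nat \<Rightarrow> real" where
  "nash_regret A pick \<mu> T = Max (\<mu> ` A) - root T (\<Prod>t<T. exp_mean_pulled pick \<mu> t)"

end

theory Submission
  imports Defs
begin

lemma ex_ge:
  fixes M :: "'a pmf" and f :: "'a \<Rightarrow> real"
  assumes "\<And>z. 0 \<le> f z" "\<And>z. f z \<le> 1"
  shows "pmf M y * f y \<le> measure_pmf.expectation M f"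
proof -
  have i1: "integrable (measure_pmf M) f"
    by (rule measure_pmf.integrable_const_bound[where B=1]) (use assms in auto)
  have i2: "integrable (measure_pmf M) (\<lambda>z. indicator {y} z * f y)"
    by (rule measure_pmf.integrable_const_bound[where B=1]) (use assms in \<open>auto simp: indicator_def\<close>)
  have "measure_pmf.expectation M (\<lambda>z. indicator {y} z * f y) = pmf M y * f y"
    by (simp add: pmf.rep_eq)
  moreover have "measure_pmf.expectation M (\<lambda>z. indicator {y} z * f y) \<le> measure_pmf.expectation M f"
    by (rule integral_mono[OF i2 i1]) (use assms in \<open>auto simp: indicator_def\<close>)
  ultimately show ?thesis by linarith
qed

lemma ex_le:
  fixes M :: "'a pmf" and f :: "'a \<Rightarrow> real"
  assumes "\<And>z. 0 \<le> f z" "\<And>z. f z \<le> 1"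
  shows "measure_pmf.expectation M f \<le> 1 - pmf M y * (1 - f y)"
proof -
  have i1: "integrable (measure_pmf M) f"
    by (rule measure_pmf.integrable_const_bound[where B=1]) (use assms in auto)
  have "pmf M y * (1 - f y) \<le> measure_pmf.expectation M (\<lambda>z. 1 - f z)"
    by (rule ex_ge) (use assms in auto)
  also have "\<dots> = 1 - measure_pmf.expectation M f"
    using i1 by (simp add: Bochner_Integration.integral_diff)
  finally show ?thesis by linarith
qed

fun gpath :: "(history \<Rightarrow> nat) \<Rightarrow> nat \<Rightarrow> history" where
  "gpath pick 0 = []"
| "gpath pick (Suc t) = gpath pick t @ [(pick (gpath pick t), pick (gpath pick t) \<noteq> 1)]"

lemma pmf_gpath:
  assumes mu1: "\<mu> 1 = e" and mu2: "\<And>i. i \<noteq> 1 \<Longrightarrow> \<mu> i = 1" and e: "0 \<le> e" "e \<le> 1"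
  shows "1 - real t * e \<le> pmf (hist pick \<mu> t) (gpath pick t)"
proof (induction t)
  case 0 then show ?case by simp
next
  case (Suc t)
  define h where "h = gpath pick t"
  define f where "f = (\<lambda>h. map_pmf (\<lambda>r. h @ [(pick h, r)]) (bernoulli_pmf (\<mu> (pick h))))"
  define g where "g = gpath pick (Suc t)"
  have inj: "inj (\<lambda>r. h @ [(pick h, r)])" by (auto intro: injI)
  have geq: "g = (\<lambda>r. h @ [(pick h, r)]) (pick h \<noteq> 1)" by (simp add: g_def h_def)
  have "pmf (f h) g = pmf (bernoulli_pmf (\<mu> (pick h))) (pick h \<noteq> 1)"
    unfolding f_def geq by (rule pmf_map_inj'[OF inj])
  moreover have b: "1 - e \<le> pmf (bernoulli_pmf (\<mu> (pick h))) (pick h \<noteq> 1)"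
  proof (cases "pick h = 1")
    case True then show ?thesis using mu1 e by (simp add: pmf_bernoulli_False)
  next
    case False then show ?thesis using mu2[OF False] e by (simp add: pmf_bernoulli_True)
  qed
  ultimately have b2: "1 - e \<le> pmf (f h) g" by simp
  have hs: "hist pick \<mu> (Suc t) = bind_pmf (hist pick \<mu> t) f" by (simp add: f_def)
  have "pmf (hist pick \<mu> t) h * pmf (f h) g \<le> pmf (hist pick \<mu> (Suc t)) g"
    unfolding hs pmf_bind by (rule ex_ge) (auto simp: pmf_le_1)
  moreover have "(1 - real t * e) * (1 - e) \<le> pmf (hist pick \<mu> t) h * (1 - e)"
    using Suc.IH e by (intro mult_right_mono) (auto simp: h_def)
  moreover have "pmf (hist pick \<mu> t) h * (1 - e) \<le> pmf (hist pick \<mu> t) h * pmf (f h) g"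
    using b2 by (intro mult_left_mono) auto
  moreover have "1 - real (Suc t) * e \<le> (1 - real t * e) * (1 - e)"
    using e by (simp add: algebra_simps)
  ultimately show ?case unfolding g_def by linarith
qed

lemma factor_bounds:
  assumes "\<And>i. 0 \<le> \<mu> i" "\<And>i. \<mu> i \<le> (1::real)"
  shows "0 \<le> exp_mean_pulled pick \<mu> t" "exp_mean_pulled pick \<mu> t \<le> 1"
proof -
  show "0 \<le> exp_mean_pulled pick \<mu> t"
    unfolding exp_mean_pulled_def by (rule Bochner_Integration.integral_nonneg) (use assms in auto)
  have "exp_mean_pulled pick \<mu> t \<le> 1 - pmf (hist pick \<mu> t) [] * (1 - \<mu> (pick []))"
    unfolding exp_mean_pulled_def by (rule ex_le) (use assms in auto)
  also have "\<dots> \<le> 1" using assms[of "pick []"] by simp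
  finally show "exp_mean_pulled pick \<mu> t \<le> 1" .
qed

lemma bad_round:
  assumes mu1: "\<mu> 1 = e" and mu2: "\<And>i. i \<noteq> 1 \<Longrightarrow> \<mu> i = 1" and e: "0 \<le> e" "e \<le> 1"
    and p: "pick (gpath pick t) = 1"
  shows "exp_mean_pulled pick \<mu> t \<le> (real t + 1) * e"
proof -
  have mb: "0 \<le> \<mu> i \<and> \<mu> i \<le> 1" for i using mu1 mu2 e by (cases "i = 1") auto
  have "exp_mean_pulled pick \<mu> t \<le> 1 - pmf (hist pick \<mu> t) (gpath pick t) * (1 - \<mu> (pick (gpath pick t)))"
    unfolding exp_mean_pulled_def by (rule ex_le) (use mb in auto)
  also have "\<dots> = 1 - pmf (hist pick \<mu> t) (gpath pick t) * (1 - e)" using p mu1 by simp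
  also have "\<dots> \<le> 1 - (1 - real t * e) * (1 - e)"
    using pmf_gpath[where \<mu>=\<mu> and e=e and t=t and pick=pick, OF mu1 mu2 e] e by (simp add: mult_right_mono)
  also have "\<dots> \<le> (real t + 1) * e"
    using e by (simp add: algebra_simps)
  finally show ?thesis .
qed

lemma real_key:
  fixes k n L :: real
  assumes "1 \<le> k" "1 \<le> n" "k < L" "sqrt (2 * L / k) \<le> 1 + sqrt (2 * L / n)"
  shows "n \<le> 12 * L"
proof -
  have "2 < 2 * L / k" using assms by (simp add: field_simps)
  hence "sqrt 2 < sqrt (2 * L / k)" by simp
  moreover have "141/100 \<le> sqrt (2::real)" by (rule real_le_rsqrt) (simp add: power2_eq_square)
  ultimately have x: "41/100 < sqrt (2 * L / n)" using assms(4) by linarith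
  have "(41/100)^2 < (sqrt (2 * L / n))^2"
    using x by (intro power_strict_mono) auto
  also have "\<dots> = 2 * L / n" using assms by simp
  finally have "(41/100)^2 * n < 2 * L" using assms by (simp add: field_simps)
  hence "1681 * n < 20000 * L" by (simp add: power2_eq_square)
  thus ?thesis using assms by linarith
qed

lemma sum_filter1:
  assumes "\<forall>p\<in>set h. snd p = (fst p \<noteq> 1)"
  shows "(\<Sum>p\<leftarrow>filter (\<lambda>p. fst p = 1) h. if snd p then 1 else (0::real)) = 0"
  using assms by (induction h) auto

lemma sum_filter2:
  assumes "\<forall>p\<in>set h. snd p = (fst p \<noteq> 1)"
  shows "(\<Sum>p\<leftarrow>filter (\<lambda>p. fst p = 2) h. if snd p then 1 else (0::real)) = real (pulls h 2)"
  using assms by (induction h) (auto simp: pulls_def)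

lemma gpath_inv:
  assumes ucb: "is_ucb_rule {1, 2} T pick"
  shows "(\<forall>p\<in>set (gpath pick t). snd p = (fst p \<noteq> 1))
    \<and> pulls (gpath pick t) 1 + pulls (gpath pick t) 2 = t
    \<and> (real (pulls (gpath pick t) 1) < ln (real T) \<longrightarrow> real (pulls (gpath pick t) 2) \<le> 1 + 12 * ln (real T))"
proof (induction t)
  case 0 then show ?case by (simp add: pulls_def)
next
  case (Suc t)
  define h where "h = gpath pick t"
  define k where "k = pulls h 1"
  define n where "n = pulls h 2"
  have IH1: "\<forall>p\<in>set h. snd p = (fst p \<noteq> 1)" and IH2: "k + n = t"
    and IH3: "real k < ln (real T) \<longrightarrow> real n \<le> 1 + 12 * ln (real T)"
    using Suc.IH by (simp_all add: h_def k_def n_def)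
  have pk: "pick h \<in> {1,2}" and pmax: "\<And>j. j \<in> {1,2} \<Longrightarrow> ucb_index T h j \<le> ucb_index T h (pick h)"
    using ucb unfolding is_ucb_rule_def by auto
  have gs: "gpath pick (Suc t) = h @ [(pick h, pick h \<noteq> 1)]" by (simp add: h_def)
  have s1: "pulls (gpath pick (Suc t)) 1 = k + (if pick h = 1 then 1 else 0)"
    unfolding gs k_def by (simp add: pulls_def)
  have s2: "pulls (gpath pick (Suc t)) 2 = n + (if pick h = 2 then 1 else 0)"
    unfolding gs n_def by (simp add: pulls_def)
  have s3: "\<forall>p\<in>set (gpath pick (Suc t)). snd p = (fst p \<noteq> 1)"
    unfolding gs using IH1 by auto
  show ?case
  proof (cases "pick h = 1")
    case True
    hence "pulls (gpath pick (Suc t)) 1 = k + 1" "pulls (gpath pick (Suc t)) 2 = n"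
      unfolding s1 s2 by auto
    then show ?thesis using IH2 IH3 s3 by auto
  next
    case False
    hence p2: "pick h = 2" using pk by auto
    have "real n \<le> 12 * ln (real T)" if kl: "real k < ln (real T)"
    proof (cases "n = 0")
      case True then show ?thesis using kl by simp
    next
      case False
      have le: "ucb_index T h 1 \<le> ucb_index T h 2" using pmax[of 1] p2 by simp
      have k0: "k \<noteq> 0"
      proof
        assume "k = 0"
        then show False using le False unfolding ucb_index_def by (simp add: k_def n_def)
      qed
      have e1: "emp_mean h 1 = 0" unfolding emp_mean_def using sum_filter1[OF IH1] by simp
      have e2: "emp_mean h 2 = 1" unfolding emp_mean_def using sum_filter2[OF IH1] False
        by (simp add: n_def)
      have "sqrt (2 * ln (real T) / real k) \<le> 1 + sqrt (2 * ln (real T) / real n)"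
        using le k0 False e1 e2 unfolding ucb_index_def by (simp add: k_def n_def)
      then show ?thesis using real_key[of "real k" "real n" "ln (real T)"] k0 False kl by simp
    qed
    moreover have "pulls (gpath pick (Suc t)) 1 = k" "pulls (gpath pick (Suc t)) 2 = n + 1"
      unfolding s1 s2 using p2 by auto
    ultimately show ?thesis using IH2 s3 by auto
  qed
qed

theorem mainTheorem19:
  fixes T :: nat and pick :: "history \<Rightarrow> nat"
  assumes "real T > 25 * ln (real T)"
    and "is_ucb_rule {1, 2} T pick"
  shows "nash_regret {1, 2} pick
           (\<lambda>i. if i = 1 then inverse ((2 * exp 1) ^ T) else 1) T \<ge> 1 - 1 / real T"
proof -
  define e :: real where "e = inverse ((2 * exp 1) ^ T)"
  define \<mu> :: "nat \<Rightarrow> real" where "\<mu> = (\<lambda>i. if i = 1 then inverse ((2 * exp 1) ^ T) else 1)"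
  define L where "L = ln (real T)"
  have T1: "1 \<le> T" using assms(1) by (cases T) auto
  have mu1: "\<mu> 1 = e" and mu2: "\<And>i. i \<noteq> 1 \<Longrightarrow> \<mu> i = 1" by (auto simp: \<mu>_def e_def)
  have ex1: "1 \<le> 2 * exp (1::real)" using exp_ge_add_one_self[of 1] by simp
  have b1: "1 \<le> (2 * exp (1::real)) ^ T" using ex1 by (rule one_le_power)
  have e0: "0 < e" "e \<le> 1" unfolding e_def using b1 by (auto simp: field_simps)
  have mb: "0 \<le> \<mu> i" "\<mu> i \<le> 1" for i using mu1 mu2 e0 by (cases "i = 1"; auto)+
  define c where "c = real T * e"
  have c0: "0 < c" unfolding c_def using T1 e0 by simp
  have lnc: "ln c = L - real T * (ln 2 + 1)"
  proof -
    have "ln c = ln (real T) + ln e" unfolding c_def using T1 e0 by (simp add: ln_mult)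
    also have "ln e = - ln ((2 * exp 1) ^ T)" unfolding e_def
      by (rule ln_inverse)
    also have "ln ((2 * exp (1::real)) ^ T) = real T * ln (2 * exp 1)" by (rule ln_realpow)
    also have "ln (2 * exp (1::real)) = ln 2 + 1" by (simp add: ln_mult)
    finally show ?thesis by (simp add: L_def)
  qed
  have LT: "L \<le> real T * ln 2"
  proof -
    have "real T \<le> 2 ^ T" using less_exp[of T] by (metis of_nat_le_iff of_nat_numeral of_nat_power less_imp_le)
    hence "ln (real T) \<le> ln (2 ^ T)" using T1 by (subst ln_le_cancel_iff) auto
    thus ?thesis by (simp add: L_def ln_realpow)
  qed
  have L0: "0 \<le> L" unfolding L_def using T1 by simp
  have lnc0: "ln c \<le> 0" using lnc LT L0 by (simp add: algebra_simps)
  have c1: "c \<le> 1" using lnc0 c0 by simp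
  have fb: "0 \<le> exp_mean_pulled pick \<mu> t" "exp_mean_pulled pick \<mu> t \<le> 1" for t
    using factor_bounds[of \<mu> pick t] mb by auto
  have prod: "T' \<le> T \<longrightarrow> (\<Prod>t<T'. exp_mean_pulled pick \<mu> t) \<le> c ^ pulls (gpath pick T') 1" for T'
  proof (induction T')
    case 0 then show ?case by (simp add: pulls_def)
  next
    case (Suc T')
    define P where "P = (\<Prod>t<T'. exp_mean_pulled pick \<mu> t)"
    define k where "k = pulls (gpath pick T') 1"
    have P0: "0 \<le> P" unfolding P_def using fb by (simp add: prod_nonneg)
    have ps: "pulls (gpath pick (Suc T')) 1 = k + (if pick (gpath pick T') = 1 then 1 else 0)"
      by (simp add: pulls_def k_def)
    show ?case
    proof
      assume le: "Suc T' \<le> T"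
      hence IH: "P \<le> c ^ k" using Suc.IH by (simp add: P_def k_def)
      have "(\<Prod>t<Suc T'. exp_mean_pulled pick \<mu> t) = P * exp_mean_pulled pick \<mu> T'"
        by (simp add: P_def)
      also have "\<dots> \<le> c ^ pulls (gpath pick (Suc T')) 1"
      proof (cases "pick (gpath pick T') = 1")
        case True
        have "exp_mean_pulled pick \<mu> T' \<le> (real T' + 1) * e"
          using bad_round[where \<mu>=\<mu> and e=e and pick=pick and t=T', OF mu1 mu2 _ _ True] e0 by auto
        also have "\<dots> \<le> c" unfolding c_def using le e0 by (intro mult_right_mono) auto
        finally have "P * exp_mean_pulled pick \<mu> T' \<le> c ^ k * c"
          using IH P0 fb[of T'] c0 by (intro mult_mono) auto
        moreover have "pulls (gpath pick (Suc T')) 1 = Suc k" using ps True by simp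
        ultimately show ?thesis by (simp add: mult.commute)
      next
        case False
        have "P * exp_mean_pulled pick \<mu> T' \<le> P" using P0 fb[of T'] by (simp add: mult_left_le)
        thus ?thesis using ps False IH by simp
      qed
      finally show "(\<Prod>t<Suc T'. exp_mean_pulled pick \<mu> t) \<le> c ^ pulls (gpath pick (Suc T')) 1" .
    qed
  qed
  define K where "K = pulls (gpath pick T) 1"
  have KL: "L \<le> real K"
  proof (cases "T = 1")
    case True then show ?thesis by (simp add: L_def)
  next
    case False
    hence T2: "2 \<le> T" using T1 by simp
    have "ln 2 \<le> L" unfolding L_def using T2 by (subst ln_le_cancel_iff) auto
    hence L23: "2/3 \<le> L" using ln2_ge_two_thirds by linarith
    show ?thesis
    proof (rule ccontr)
      assume "\<not> L \<le> real K"
      hence "real K < L" by simp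
      moreover have inv: "K + pulls (gpath pick T) 2 = T"
        "real K < L \<longrightarrow> real (pulls (gpath pick T) 2) \<le> 1 + 12 * L"
        using gpath_inv[OF assms(2), of T] by (simp_all add: K_def L_def)
      moreover have "real T = real K + real (pulls (gpath pick T) 2)"
        using inv(1) by (metis of_nat_add)
      ultimately have "real T < 13 * L + 1" by linarith
      thus False using assms(1) L23 unfolding L_def by linarith
    qed
  qed
  have cK: "c ^ K \<le> (1 / real T) ^ T"
  proof -
    have "ln (c ^ K) = real K * ln c" by (simp add: ln_realpow)
    also have "\<dots> \<le> L * ln c" using KL lnc0 by (intro mult_right_mono_neg) auto
    also have "\<dots> = L * (L - real T * (ln 2 + 1))" using lnc by simp
    also have "\<dots> \<le> L * (- real T)"
      using LT L0 by (intro mult_left_mono) (auto simp: algebra_simps)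
    also have "\<dots> = ln ((1 / real T) ^ T)" using T1 by (simp add: ln_realpow ln_div L_def)
    finally show ?thesis using c0 T1 by (subst (asm) ln_le_cancel_iff) auto
  qed
  define P where "P = (\<Prod>t<T. exp_mean_pulled pick \<mu> t)"
  have P0: "0 \<le> P" unfolding P_def using fb by (simp add: prod_nonneg)
  have "P \<le> (1 / real T) ^ T" using prod[of T] cK by (simp add: P_def K_def)
  hence "root T P \<le> root T ((1 / real T) ^ T)" using T1 by (intro real_root_le_mono) auto
  also have "\<dots> = 1 / real T" using T1 by (intro real_root_pos2) auto
  finally have r: "root T P \<le> 1 / real T" .
  have mx: "Max (\<mu> ` {1, 2}) = 1" using mu1 mu2[of 2] e0 by (simp add: max_def)
  have "nash_regret {1, 2} pick \<mu> T \<ge> 1 - 1 / real T"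
    unfolding nash_regret_def mx using r by (simp add: P_def)
  thus ?thesis by (simp add: \<mu>_def)
qed

end
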